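(* Let $S=\langle n_1,n_2\rangle$ be a numerical semigroup with $2\leq n_1<n_2$. Then $S$ is a MANS-semigroup if and only if there exists $a\in\mathbb{N}\setminus\{0\}$ such that $n_2=an_1+1$.
   Context: $\mathbb{N}=\{0,1,2,\ldots\}$. A numerical semigroup is a subset $S\subseteq\mathbb{N}$ closed under addition, containing $0$, with $\mathbb{N}\setminus S$ finite; $\langle A\rangle$ is the submonoid of $(\mathbb{N},+)$ generated by $A$. The multiplicity $\mathrm{m}(S)$ is the least element of $S\setminus\{0\}$. $S$ is a MANS-semigroup if $w(1)<w(2)<\cdots<w(\mathrm{m}(S)-1)$, where $w(i)$ is the least element of $S$ congruent to $i$ modulo $\mathrm{m}(S)$. *)

theory Defs
  imports Main
begin

inductive_set gen_monoid :: "nat set \<Rightarrow> nat set" for A :: "nat set" where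
  zero: "0 \<in> gen_monoid A"
| add: "a \<in> A \<Longrightarrow> x \<in> gen_monoid A \<Longrightarrow> a + x \<in> gen_monoid A"

definition numerical_semigroup :: "nat set \<Rightarrow> bool" where
  "numerical_semigroup S \<longleftrightarrow> 0 \<in> S \<and> (\<forall>x\<in>S. \<forall>y\<in>S. x + y \<in> S) \<and> finite (UNIV - S)"

definition multiplicity_ns :: "nat set \<Rightarrow> nat" where
  "multiplicity_ns S = (LEAST x. x \<in> S \<and> x \<noteq> 0)"

definition apery_w :: "nat set \<Rightarrow> nat \<Rightarrow> nat" where
  "apery_w S i = (LEAST x. x \<in> S \<and> x mod multiplicity_ns S = i mod multiplicity_ns S)"

definition MANS :: "nat set \<Rightarrow> bool" where
  "MANS S \<longleftrightarrow> (\<forall>i j. 1 \<le> i \<and> i < j \<and> j \<le> multiplicity_ns S - 1 \<longrightarrow> apery_w S i < apery_w S j)"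

end

theory Submission
  imports Defs
begin

lemma gm2_char: "x \<in> gen_monoid {n1, n2} \<longleftrightarrow> (\<exists>a b. x = a*n1 + b*n2)"
proof
  assume "x \<in> gen_monoid {n1, n2}"
  then show "\<exists>a b. x = a*n1 + b*n2"
  proof (induction rule: gen_monoid.induct)
    case zero then show ?case by (rule exI[of _ 0], rule exI[of _ 0]) simp
  next
    case (add c y)
    then obtain a b where "y = a*n1 + b*n2" by blast
    with add show ?case
      by (elim insertE) (rule exI[of _ "Suc a"], rule exI[of _ b], simp,
                         rule exI[of _ a], rule exI[of _ "Suc b"], simp, simp)
  qed
next
  assume "\<exists>a b. x = a*n1 + b*n2"
  then obtain a b where x: "x = a*n1 + b*n2" by blast
  have B: "b*n2 \<in> gen_monoid {n1, n2}" for b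
    by (induction b) (auto intro: gen_monoid.intros)
  have "a*n1 + b*n2 \<in> gen_monoid {n1, n2}" for a
    by (induction a) (auto intro: gen_monoid.intros B simp: add.assoc)
  then show "x \<in> gen_monoid {n1, n2}" using x by simp
qed

theorem proposition2p3:
  fixes n1 n2 :: nat
  assumes "numerical_semigroup (gen_monoid {n1, n2})"
    and "2 \<le> n1" and "n1 < n2"
  shows "MANS (gen_monoid {n1, n2}) \<longleftrightarrow> (\<exists>a::nat. a \<noteq> 0 \<and> n2 = a * n1 + 1)"
proof -
  let ?S = "gen_monoid {n1, n2}"
  have mem: "x \<in> ?S \<longleftrightarrow> (\<exists>a b. x = a*n1 + b*n2)" for x by (rule gm2_char)
  have m: "multiplicity_ns ?S = n1"
    unfolding multiplicity_ns_def
  proof (rule Least_equality)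
    show "n1 \<in> ?S \<and> n1 \<noteq> 0" proof -
      have "n1 = 1*n1 + 0*n2" by simp
      then have "n1 \<in> ?S" using mem[of n1] by blast
      then show ?thesis using assms(2) by simp
    qed
  next
    fix y assume "y \<in> ?S \<and> y \<noteq> 0"
    then obtain a b where y: "y = a*n1 + b*n2" "y \<noteq> 0" using mem by blast
    show "n1 \<le> y"
    proof (cases "a = 0")
      case True
      then have "b \<ge> 1" using y by (cases b) auto
      then have "n2 \<le> b*n2" by simp
      then show ?thesis using y assms(3) by linarith
    next
      case False
      then have "n1 \<le> a*n1" by simp
      then show ?thesis using y by linarith
    qed
  qed
  obtain N where N: "\<And>x. x \<ge> N \<Longrightarrow> x \<in> ?S"
  proof -
    have fin: "finite (UNIV - ?S)" using assms(1) unfolding numerical_semigroup_def by blast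
    have "\<forall>x\<in>UNIV - ?S. x < Suc (Max (UNIV - ?S))"
      using fin by (meson Max_ge le_imp_less_Suc)
    then have "\<And>x. x \<ge> Suc (Max (UNIV - ?S)) \<Longrightarrow> x \<in> ?S"
      by (meson DiffI UNIV_I not_le)
    then show ?thesis by (rule that)
  qed
  have ex: "\<exists>x. x \<in> ?S \<and> x mod n1 = i mod n1" for i
  proof -
    have "N*n1 + i \<ge> N" proof -
      have "N \<le> N*n1" using assms(2) by simp
      then show ?thesis by linarith
    qed
    then show ?thesis using N by (intro exI[of _ "N*n1+i"]) auto
  qed
  have wS: "apery_w ?S i \<in> ?S \<and> apery_w ?S i mod n1 = i mod n1" for i
    unfolding apery_w_def m using LeastI_ex[OF ex[of i]] .
  have wle: "x \<in> ?S \<Longrightarrow> x mod n1 = i mod n1 \<Longrightarrow> apery_w ?S i \<le> x" for x i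
    unfolding apery_w_def m by (rule Least_le) simp
  show ?thesis
  proof
    assume M: "MANS ?S"
    define r where "r = n2 mod n1"
    have rl: "r < n1" using assms(2) unfolding r_def by simp
    obtain a b where w1: "apery_w ?S 1 = a*n1 + b*n2" using wS[of 1] mem by blast
    have w1m: "(a*n1 + b*n2) mod n1 = 1" using wS[of 1] w1 assms(2) by simp
    have "b \<noteq> 0"
    proof
      assume "b = 0" then show False using w1m by simp
    qed
    then have w1g: "apery_w ?S 1 \<ge> n2" using w1 by (simp add: trans_le_add2)
    have "r \<noteq> 0"
    proof
      assume "r = 0"
      then have "n1 dvd n2" unfolding r_def by auto
      then have "n1 dvd a*n1 + b*n2" by simp
      then show False using w1m assms(2) by (simp add: dvd_eq_mod_eq_0)
    qed
    moreover have "\<not> r \<ge> 2"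
    proof
      assume r2: "r \<ge> 2"
      have "apery_w ?S 1 < apery_w ?S r"
        using M rl r2 unfolding MANS_def m by auto
      moreover have "apery_w ?S r \<le> n2"
        proof -
        have "n2 = 0*n1 + 1*n2" by simp
        then have "n2 \<in> ?S" using mem[of n2] by blast
        then show ?thesis using wle[of n2 r] unfolding r_def by simp
      qed
      ultimately show False using w1g by simp
    qed
    ultimately have "r = 1" by simp
    then have "n2 = (n2 div n1) * n1 + 1" unfolding r_def
      by (metis div_mult_mod_eq)
    moreover have "n2 div n1 \<noteq> 0" using assms(2,3) by (simp add: div_eq_0_iff)
    ultimately show "\<exists>a::nat. a \<noteq> 0 \<and> n2 = a * n1 + 1" by blast
  next
    assume "\<exists>a::nat. a \<noteq> 0 \<and> n2 = a * n1 + 1"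
    then obtain c where c: "n2 = c*n1 + 1" by blast
    have n2m: "(b*n2) mod n1 = b mod n1" for b
    proof -
      have "b*n2 = (b*c)*n1 + b" using c by (simp add: algebra_simps)
      then show ?thesis by simp
    qed
    have weq: "apery_w ?S i = i*n2" if "i < n1" for i
    proof (rule antisym)
      have "i*n2 = 0*n1 + i*n2" by simp
      then have "i*n2 \<in> ?S" using mem[of "i*n2"] by blast
      then show "apery_w ?S i \<le> i*n2"
        using wle[of "i*n2" i] n2m[of i] by auto
    next
      obtain a b where ab: "apery_w ?S i = a*n1 + b*n2" using wS[of i] mem by blast
      have "b mod n1 = i" using wS[of i] ab n2m[of b] that by simp
      then have "i \<le> b" by (metis mod_less_eq_dividend)
      then have "i*n2 \<le> b*n2" by simp
      then show "i*n2 \<le> apery_w ?S i" using ab by linarith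
    qed
    show "MANS ?S" unfolding MANS_def m
    proof (intro allI impI)
      fix i j assume h: "1 \<le> i \<and> i < j \<and> j \<le> n1 - 1"
      then have "i < n1" "j < n1" by auto
      then show "apery_w ?S i < apery_w ?S j" using weq h assms by simp
    qed
  qed
qed

end
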